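(* Let $x_0\in\mathbb{R}^d$ and let $K\subset\mathcal{D}_0$ be an OU set about $x_0$. Then $K$ is Lebesgue measurable; the closure $\bar K$ and the closure $\overline{K^\circ}$ of the interior of $K$ are also OU sets about $x_0$; and $\lambda(K^\circ)=\lambda(K)=\lambda(\bar K)$, where $\lambda$ is Lebesgue measure on $\mathbb{R}^d$.
   Context: For $x_0\in\mathbb{R}^d$, $\mathcal{D}_0=\{x\in\mathbb{R}^d: x\ge x_0\}$, with inequalities between vectors taken componentwise. A set $K\subset\mathcal{D}_0$ is called orthounimodal (OU) about $x_0$ if for every $x\in K$ and every $x'$ with $x\ge x'\ge x_0$ we have $x'\in K$. *)

theory Defs
  imports "HOL-Analysis.Analysis"
begin

definition cw_le :: "real ^ 'n \<Rightarrow> real ^ 'n \<Rightarrow> bool" where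
  "cw_le x y \<longleftrightarrow> (\<forall>i. x $ i \<le> y $ i)"

definition D0 :: "real ^ 'n \<Rightarrow> (real ^ 'n) set" where
  "D0 x0 = {x. cw_le x0 x}"

definition orthounimodal :: "real ^ 'n \<Rightarrow> (real ^ 'n) set \<Rightarrow> bool" where
  "orthounimodal x0 K \<longleftrightarrow> K \<subseteq> D0 x0 \<and>
     (\<forall>x\<in>K. \<forall>x'. cw_le x' x \<and> cw_le x0 x' \<longrightarrow> x' \<in> K)"

end

theory Submission
  imports Defs
begin

lemma ou_D:
  assumes "orthounimodal x0 K" "x \<in> K" "\<And>i. x' $ i \<le> x $ i" "\<And>i. x0 $ i \<le> x' $ i"
  shows "x' \<in> K"
  using assms unfolding orthounimodal_def cw_le_def by blast

lemma ou_sub: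
  assumes "orthounimodal x0 K" "x \<in> K"
  shows "x0 $ i \<le> x $ i"
  using assms unfolding orthounimodal_def cw_le_def D0_def by blast

lemma min_dist:
  fixes x x' y :: "real ^ 'n"
  assumes "\<And>i. x' $ i \<le> x $ i"
  shows "dist (\<chi> i. min (y$i) (x'$i)) x' \<le> dist y x"
  unfolding dist_norm
proof (rule norm_le_componentwise_cart)
  fix i show "norm (((\<chi> i. min (y$i) (x'$i)) - x') $ i) \<le> norm ((y - x) $ i)"
    using assms[of i] by (auto simp: real_norm_def min_def)
qed

lemma comp_dist: "\<bar>(x::real^'n) $ i - y $ i\<bar> \<le> dist x y"
  unfolding dist_norm by (metis component_le_norm_cart vector_minus_component)

lemma closure_sub_D0:
  assumes "orthounimodal x0 K" "x \<in> closure K"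
  shows "x0 $ i \<le> x $ i"
proof (rule ccontr)
  assume "\<not> ?thesis"
  then obtain y where "y \<in> K" "dist y x < x0$i - x$i"
    using assms(2) unfolding closure_approachable by (meson diff_gt_0_iff_gt not_le)
  moreover have "x0$i \<le> y$i" using ou_sub[OF assms(1) \<open>y\<in>K\<close>] .
  ultimately show False using comp_dist[of y i x] by linarith
qed

lemma closure_down:
  assumes ou: "orthounimodal x0 K" and x: "x \<in> closure K"
    and le: "\<And>i. x' $ i \<le> x $ i" and ge: "\<And>i. x0 $ i \<le> x' $ i"
  shows "x' \<in> closure K"
  unfolding closure_approachable
proof (intro allI impI)
  fix e :: real assume "e > 0"
  then obtain y where y: "y \<in> K" "dist y x < e" using x unfolding closure_approachable by blast
  let ?w = "\<chi> i. min (y$i) (x'$i)"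
  have "?w \<in> K"
    by (rule ou_D[OF ou y(1)]) (auto simp: ge ou_sub[OF ou y(1)])
  moreover have "dist ?w x' < e" using min_dist[of x' x y] le y(2) by force
  ultimately show "\<exists>w\<in>K. dist w x' < e" by blast
qed

lemma L_int:
  fixes y z :: "real ^ 'n"
  assumes ou: "orthounimodal x0 K" and z: "z \<in> closure K"
    and yz: "\<And>i. x0 $ i < y $ i \<and> y $ i < z $ i"
  shows "y \<in> interior K"
proof -
  define d where "d = Min (range (\<lambda>i. min (z$i - y$i) (y$i - x0$i)))"
  have dpos: "d > 0" unfolding d_def using yz by (subst Min_gr_iff) auto
  have dle0: "d \<le> min (z$i - y$i) (y$i - x0$i)" for i
    unfolding d_def by (rule Min_le) auto
  have dle: "d \<le> z$i - y$i" "d \<le> y$i - x0$i" for i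
    using dle0[of i] by auto
  obtain w where w: "w \<in> K" "dist w z < d/2"
    using z dpos unfolding closure_approachable by (meson half_gt_zero)
  have "ball y (d/2) \<subseteq> K"
  proof
    fix u assume "u \<in> ball y (d/2)"
    then have u: "dist y u < d/2" by simp
    show "u \<in> K"
    proof (rule ou_D[OF ou w(1)])
      fix i
      have "\<bar>y$i - u$i\<bar> < d/2" using comp_dist[of y i u] u by linarith
      moreover have "\<bar>w$i - z$i\<bar> < d/2" using comp_dist[of w i z] w(2) by linarith
      ultimately show "u$i \<le> w$i" "x0$i \<le> u$i" using dle[of i] by linarith+
    qed
  qed
  then show ?thesis unfolding mem_interior using dpos by (meson half_gt_zero)
qed


lemma int_O:
  assumes ou: "orthounimodal x0 K" and x: "x \<in> interior K"
  shows "x0 $ i < x $ i"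
proof -
  obtain e where e: "e > 0" "ball x e \<subseteq> K" using x unfolding mem_interior by blast
  define p where "p = x - (e/2) *\<^sub>R axis i 1"
  have "dist x p = e/2" using e(1) by (simp add: p_def dist_norm)
  then have "p \<in> K" using e by auto
  then have "x0$i \<le> p$i" by (rule ou_sub[OF ou])
  then show ?thesis using e(1) by (simp add: p_def)
qed

lemma int_up:
  fixes x :: "real ^ 'n"
  assumes x: "x \<in> interior K"
  shows "\<exists>z\<in>K. \<forall>i. x$i < z$i"
proof -
  obtain e where e: "e > 0" "ball x e \<subseteq> K" using x unfolding mem_interior by blast
  define d where "d = e / (2 * real CARD('n))"
  have cpos: "real CARD('n) > 0" by simp
  then have dpos: "d > 0" using e(1) by (simp add: d_def)
  define z where "z = x + (\<chi> i. d)"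
  have "norm (z - x) \<le> (\<Sum>i\<in>UNIV. \<bar>(z - x)$i\<bar>)" by (rule norm_le_l1_cart)
  also have "\<dots> = real CARD('n) * d" using dpos by (simp add: z_def)
  also have "\<dots> = e/2" using cpos by (simp add: d_def)
  finally have "dist x z < e" using e(1) by (simp add: dist_norm norm_minus_commute)
  then have "z \<in> K" using e by auto
  moreover have "\<forall>i. x$i < z$i" using dpos by (simp add: z_def)
  ultimately show ?thesis by blast
qed

lemma L2:
  fixes x x' :: "real ^ 'n"
  assumes ou: "orthounimodal x0 K" and x: "x \<in> interior K"
    and le: "\<And>i. x' $ i \<le> x $ i" and ge: "\<And>i. x0 $ i \<le> x' $ i"
  shows "x' \<in> closure (interior K)"
  unfolding closure_approachable
proof (intro allI impI)
  fix e :: real assume e: "e > 0"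
  obtain z where z: "z \<in> K" "\<forall>i. x$i < z$i" using int_up[OF x] by blast
  define n where "n = norm (x - x')"
  define t where "t = min 1 (e / (2 * (n + 1)))"
  have n0: "n \<ge> 0" by (simp add: n_def)
  have tpos: "t > 0" using e n0 by (auto simp: t_def intro!: divide_pos_pos)
  have t1: "t \<le> 1" by (simp add: t_def)
  have te: "t \<le> e / (2 * (n + 1))" by (simp add: t_def)
  define y where "y = x' + t *\<^sub>R (x - x')"
  have "dist y x' = t * n" using tpos by (simp add: y_def n_def dist_norm)
  also have "\<dots> \<le> e / (2 * (n + 1)) * n" using te n0 by (rule mult_right_mono)
  also have "\<dots> < e"
  proof -
    have "e * n < e * (2 * (n + 1))" using e n0 by simp
    then show ?thesis using n0 by (simp add: field_simps)
  qed
  finally have dy: "dist y x' < e" .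
  have "y \<in> interior K"
  proof (rule L_int[OF ou closure_subset[THEN subsetD, OF z(1)]])
    fix i
    have xi: "x0$i < x$i" by (rule int_O[OF ou x])
    have "y$i = (1 - t) * x'$i + t * x$i" by (simp add: y_def algebra_simps)
    moreover have "(1 - t) * x0$i \<le> (1 - t) * x'$i" using t1 ge[of i] by (simp add: mult_left_mono)
    moreover have "t * x0$i < t * x$i" using tpos xi by simp
    moreover have "(1 - t) * x'$i \<le> (1 - t) * x$i" using t1 le[of i] by (simp add: mult_left_mono)
    ultimately show "x0 $ i < y $ i \<and> y $ i < z $ i" using z(2)[rule_format, of i]
      by (auto simp: algebra_simps)
  qed
  then show "\<exists>y\<in>interior K. dist y x' < e" using dy by blast
qed

lemma cl_int_down:
  assumes ou: "orthounimodal x0 K" and x: "x \<in> closure (interior K)"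
    and le: "\<And>i. x' $ i \<le> x $ i" and ge: "\<And>i. x0 $ i \<le> x' $ i"
  shows "x' \<in> closure (interior K)"
  unfolding closure_approachable
proof (intro allI impI)
  fix e :: real assume "e > 0"
  then obtain y where y: "y \<in> interior K" "dist y x < e/2"
    using x unfolding closure_approachable by (meson half_gt_zero)
  let ?w = "\<chi> i. min (y$i) (x'$i)"
  have "?w \<in> closure (interior K)"
    by (rule L2[OF ou y(1)]) (auto simp: ge less_imp_le[OF int_O[OF ou y(1)]] order_trans[OF ge])
  then obtain v where v: "v \<in> interior K" "dist v ?w < e/2"
    using \<open>e>0\<close> unfolding closure_approachable by (meson half_gt_zero)
  have "dist ?w x' < e/2" using min_dist[of x' x y] le y(2) by force
  then have "dist v x' < e" using v(2) dist_triangle[of v x' ?w] by linarith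
  then show "\<exists>w\<in>interior K. dist w x' < e" using v(1) by blast
qed


lemma key_disj:
  assumes ou: "orthounimodal x0 K"
    and x: "x \<in> closure K" and y: "y \<notin> interior K" "y \<in> box x0 b"
    and c: "c > 0" and eq: "x = y + (\<chi> i. c)"
  shows False
proof -
  have "y \<in> interior K"
  proof (rule L_int[OF ou x])
    fix i show "x0 $ i < y $ i \<and> y $ i < x $ i"
      using y(2) c eq by (auto simp: mem_box_cart)
  qed
  then show False using y(1) by blast
qed

lemma S_meas:
  fixes K :: "(real^'n) set"
  shows "(closure K - interior K) \<inter> box a b \<in> sets lebesgue"
proof -
  have "(closure K - interior K) \<inter> box a b \<in> sets borel"
    by (intro sets.Int sets.Diff borel_closed borel_open) auto
  then show ?thesis by simp
qed


lemma S_negl: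
  fixes K :: "(real^'n) set"
  assumes ou: "orthounimodal x0 K"
  shows "negligible ((closure K - interior K) \<inter> box x0 b)"
proof -
  define S where "S = (closure K - interior K) \<inter> box x0 b"
  define b' where "b' = (\<chi> i. b$i + 1)"
  have Ssets: "S \<in> sets lebesgue" unfolding S_def by (rule S_meas)
  have Ssub: "S \<subseteq> box x0 b" unfolding S_def by auto
  have Scb: "S \<subseteq> cbox x0 b'"
  proof
    fix x assume "x \<in> S"
    then have "x \<in> box x0 b" using Ssub by blast
    then have "\<forall>i. x0$i < x$i \<and> x$i < b$i" by (simp add: mem_box_cart)
    then have "\<forall>i. x0$i \<le> x$i \<and> x$i \<le> b$i + 1" by (meson less_imp_le add_less_cancel_left less_add_one less_trans)
    then show "x \<in> cbox x0 b'" by (simp add: mem_box_cart b'_def)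
  qed
  have Slm: "S \<in> lmeasurable"
    by (rule fmeasurableI2[OF lmeasurable_cbox[of x0 b'] Scb Ssets])
  define V where "V = measure lebesgue (cbox x0 b')"
  have bound: "real N * measure lebesgue S \<le> V" if N: "N > 0" for N :: nat
  proof -
    define T where "T k = (+) (\<chi> i. real k / real N) ` S" for k :: nat
    have Tsets: "T k \<in> sets lebesgue" for k
      unfolding T_def by (rule lebesgue_sets_translation[OF Ssets])
    have Tlm: "T k \<in> lmeasurable" for k
      unfolding T_def by (rule measurable_translation[OF Slm])
    have Tmeas: "measure lebesgue (T k) = measure lebesgue S" for k
      unfolding T_def by (rule measure_translation)
    have Tsub: "T k \<subseteq> cbox x0 b'" if "k \<in> {1..N}" for k
    proof
      fix p assume "p \<in> T k"
      then obtain s where s: "s \<in> S" "p = (\<chi> i. real k / real N) + s" unfolding T_def by auto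
      have "real k / real N \<le> 1" "real k / real N \<ge> 0" using that N by auto
      moreover have "\<forall>i. x0$i < s$i \<and> s$i < b$i" using s(1) Ssub by (auto simp: mem_box_cart)
      ultimately have "\<forall>i. x0$i \<le> p$i \<and> p$i \<le> b$i + 1" using s(2)
        by (smt (verit) vector_add_component vec_lambda_beta)
      then show "p \<in> cbox x0 b'" by (simp add: mem_box_cart b'_def)
    qed
    have Tdisj: "T m \<inter> T n = {}" if "m < n" for m n
    proof (rule ccontr)
      assume "T m \<inter> T n \<noteq> {}"
      then obtain s1 s2 where s: "s1 \<in> S" "s2 \<in> S"
        "(\<chi> i. real m / real N) + s1 = (\<chi> i. real n / real N) + s2"
        unfolding T_def by auto
      have eq: "s1 = s2 + (\<chi> i. real n / real N - real m / real N)"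
        using s(3) by (auto simp: vec_eq_iff algebra_simps)
      have "real m / real N < real n / real N" using that N by (simp add: divide_strict_right_mono)
      then show False
        using key_disj[OF ou _ _ _ _ eq, of b] s(1,2) unfolding S_def by auto
    qed
    have dfam: "disjoint_family_on T {1..N}"
      unfolding disjoint_family_on_def
      by (metis Tdisj inf_commute linorder_neqE_nat)
    have "measure lebesgue (\<Union>k\<in>{1..N}. T k) = (\<Sum>k\<in>{1..N}. measure lebesgue (T k))"
      proof (rule measure_finite_Union)
      show "\<And>i. i \<in> {1..N} \<Longrightarrow> emeasure lebesgue (T i) \<noteq> \<infinity>"
        using Tlm by (metis fmeasurable_def infinity_ennreal_def mem_Collect_eq order_less_irrefl)
    qed (use Tsets dfam in auto)
    also have "\<dots> = real N * measure lebesgue S" by (simp add: Tmeas)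
    finally have "real N * measure lebesgue S = measure lebesgue (\<Union>k\<in>{1..N}. T k)" by simp
    also have "\<dots> \<le> V" unfolding V_def
      proof (rule measure_mono_fmeasurable)
      show "(\<Union>k\<in>{1..N}. T k) \<subseteq> cbox x0 b'" using Tsub by blast
      show "(\<Union>k\<in>{1..N}. T k) \<in> sets lebesgue" by (rule sets.finite_UN) (auto intro: Tsets)
    qed (rule lmeasurable_cbox)
    finally show ?thesis .
  qed
  have m0: "measure lebesgue S = 0"
  proof (rule ccontr)
    assume "measure lebesgue S \<noteq> 0"
    then have mpos: "measure lebesgue S > 0" by (simp add: order_less_le)
    obtain N :: nat where N: "V / measure lebesgue S < real N" using reals_Archimedean2 by blast
    have "V < real N * measure lebesgue S" using N mpos by (simp add: field_simps)
    moreover have "V \<ge> 0" unfolding V_def by (rule measure_nonneg)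
    then have "V / measure lebesgue S \<ge> 0" using mpos by simp
    then have "N > 0" using N by linarith
    then have "real N * measure lebesgue S \<le> V" by (rule bound)
    ultimately show False by linarith
  qed
  show ?thesis using Slm m0 negligible_iff_measure0 unfolding S_def by blast
qed


lemma hyper_negl: "negligible {x::real^'n. x$i = c}"
proof -
  have "{x::real^'n. x$i = c} = {x. x \<bullet> axis i 1 = c}" by (simp add: cart_eq_inner_axis)
  then show ?thesis by (metis negligible_standard_hyperplane axis_in_Basis_iff Basis_real_def insertI1)
qed

lemma bdry_negl:
  fixes K :: "(real^'n) set"
  assumes ou: "orthounimodal x0 K"
  shows "negligible (closure K - interior K)"
proof -
  let ?B = "closure K - interior K"
  have cover: "?B \<subseteq> (\<Union>M::nat. ?B \<inter> box x0 (\<chi> i. x0$i + real M)) \<union> \<Union>(range (\<lambda>i. {x. x$i = x0$i}))"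
  proof
    fix x assume x: "x \<in> ?B"
    show "x \<in> (\<Union>M::nat. ?B \<inter> box x0 (\<chi> i. x0$i + real M)) \<union> \<Union>(range (\<lambda>i. {x. x$i = x0$i}))"
    proof (cases "\<forall>i. x0$i < x$i")
      case True
      obtain M :: nat where M: "norm (x - x0) < real M" using reals_Archimedean2 by blast
      have "x$i < x0$i + real M" for i
        using component_le_norm_cart[of "x - x0" i] M by auto
      then have "x \<in> box x0 (\<chi> i. x0$i + real M)" using True by (simp add: mem_box_cart)
      then show ?thesis using x by blast
    next
      case False
      then obtain i where "\<not> x0$i < x$i" by blast
      moreover have "x0$i \<le> x$i" using closure_sub_D0[OF ou] x by blast
      ultimately have "x$i = x0$i" by linarith
      then show ?thesis by blast
    qed
  qed
  have "negligible ((\<Union>M::nat. ?B \<inter> box x0 (\<chi> i. x0$i + real M)) \<union> \<Union>(range (\<lambda>i. {x. x$i = x0$i})))"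
  proof (rule negligible_Un)
    show "negligible (\<Union>M::nat. ?B \<inter> box x0 (\<chi> i. x0$i + real M))"
      by (rule negligible_Union_nat) (rule S_negl[OF ou])
    show "negligible (\<Union>(range (\<lambda>i. {x::real^'n. x$i = x0$i})))"
      by (rule negligible_Union) (auto intro: hyper_negl)
  qed
  then show ?thesis using cover negligible_subset by blast
qed

theorem mainTheorem1:
  fixes x0 :: "real ^ 'n" and K :: "(real ^ 'n) set"
  assumes "orthounimodal x0 K"
  shows "K \<in> sets lebesgue
    \<and> orthounimodal x0 (closure K)
    \<and> orthounimodal x0 (closure (interior K))
    \<and> emeasure lebesgue (interior K) = emeasure lebesgue K
    \<and> emeasure lebesgue K = emeasure lebesgue (closure K)"
proof -
  note ou = assms
  have N: "negligible (closure K - interior K)" by (rule bdry_negl[OF ou])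
  have IK: "interior K \<subseteq> K" by (rule interior_subset)
  have KC: "K \<subseteq> closure K" by (rule closure_subset)
  have Iset: "interior K \<in> sets lebesgue" by (simp add: borel_open)
  have N1: "K - interior K \<in> null_sets lebesgue"
    using negligible_subset[OF N, of "K - interior K"] KC negligible_iff_null_sets by blast
  have N2: "closure K - interior K \<in> null_sets lebesgue" using N negligible_iff_null_sets by blast
  have eK: "K = interior K \<union> (K - interior K)" using IK by blast
  have eC: "closure K = interior K \<union> (closure K - interior K)" using IK KC by blast
  have m1: "K \<in> sets lebesgue" using Iset N1 eK by (metis null_setsD2 sets.Un)
  have m2: "emeasure lebesgue K = emeasure lebesgue (interior K)"
    by (subst eK) (rule emeasure_Un_null_set[OF Iset N1])
  have m3: "emeasure lebesgue (closure K) = emeasure lebesgue (interior K)"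
    by (subst eC) (rule emeasure_Un_null_set[OF Iset N2])
  have o1: "orthounimodal x0 (closure K)"
    unfolding orthounimodal_def D0_def cw_le_def
    using closure_sub_D0[OF ou] closure_down[OF ou] by blast
  have o2: "orthounimodal x0 (closure (interior K))"
    unfolding orthounimodal_def D0_def cw_le_def
    using closure_sub_D0[OF ou] closure_mono[OF IK] cl_int_down[OF ou] by blast
  show ?thesis using m1 m2 m3 o1 o2 by simp
qed

end
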